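(* Let $\mathcal I\subseteq\mathbb R$, let $q:\mathcal I\to(0,\infty)$ be a target FDR curve, and for each $i\in[m]$ let $X_i\in\mathcal X_i$ be a test statistic and $p_i:\mathcal X_i\times\mathcal I\to[0,1]$ a p-value function. Assume $X_1,\dots,X_m$ are independent and that $p_i(X_i;c)$ is a valid p-value for $H_{i,c}:\theta_i\ge c$ for all $i\in[m]$, $c\in\mathcal I$. Define $P_{i,\sup}=\sup_{c\in\mathcal I}p_i(X_i;c)/q(c)$, and let $\mathcal S^T$ be the output of the iteration $\mathcal S^1=[m]$, $\mathcal S^{t+1}=\{i\in\mathcal S^t:P_{i,\sup}\le|\mathcal S^t|/m\}$, stopped at the first $T$ with $\mathcal S^{T+1}=\mathcal S^T$ (equivalently, the Benjamini–Hochberg procedure at level 1 applied to $P_{1,\sup},\dots,P_{m,\sup}$). Then $$\sup_{c\in\mathcal I}\frac{\mathrm{FDR}(c)}{q(c)}\le\mathbb E\left[\sup_{c\in\mathcal I}\frac{\sum_{i=1}^m\mathbf 1_{\{H_{i,c}\text{ true}\}}\mathbf 1_{\{i\in\mathcal S^T\}}}{q(c)(1\vee|\mathcal S^T|)}\right]\le1.$$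
   Context: $\theta_1,\dots,\theta_m$ are unknown real parameters. A p-value $P$ is valid for $H_{i,c}$ if $\mathbb P(P\le u)\le u$ for all $u\in[0,1]$ whenever $H_{i,c}$ is true. For $c\in\mathcal I$, $\mathrm{FDR}(c)=\mathbb E\big[\sum_{i=1}^m\mathbf 1_{\{H_{i,c}\text{ true}\}}\mathbf 1_{\{i\in\mathcal S^T\}}/(1\vee|\mathcal S^T|)\big]$. *)

theory Defs
  imports "HOL-Probability.Probability"
begin

text \<open>Hypotheses are indexed by 0,...,m-1 (instead of 1,...,m).\<close>

text \<open>P_{i,sup} = sup over c in I of p_i(x;c)/q(c), extended-real valued
  (it may be +infinity when q is not bounded away from 0).\<close>
definition Psup :: "real set \<Rightarrow> (real \<Rightarrow> real) \<Rightarrow> ('b \<Rightarrow> real \<Rightarrow> real) \<Rightarrow> 'b \<Rightarrow> ereal" where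
  "Psup I q f x = (SUP c\<in>I. ereal (f x c / q c))"

definition bh_step :: "nat \<Rightarrow> (nat \<Rightarrow> ereal) \<Rightarrow> nat set \<Rightarrow> nat set" where
  "bh_step m P S = {i\<in>S. P i \<le> ereal (real (card S) / real m)}"

text \<open>bh_seq m P t is S^{t+1}; S^1 = [m].\<close>
definition bh_seq :: "nat \<Rightarrow> (nat \<Rightarrow> ereal) \<Rightarrow> nat \<Rightarrow> nat set" where
  "bh_seq m P t = (bh_step m P ^^ t) {..<m}"

definition bh_out :: "nat \<Rightarrow> (nat \<Rightarrow> ereal) \<Rightarrow> nat set" where
  "bh_out m P = bh_seq m P (LEAST t. bh_seq m P (Suc t) = bh_seq m P t)"

definition fdp :: "(nat \<Rightarrow> real) \<Rightarrow> nat \<Rightarrow> nat set \<Rightarrow> real \<Rightarrow> real" where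
  "fdp \<theta> m S c = (\<Sum>i<m. (if c \<le> \<theta> i \<and> i \<in> S then 1 else 0)) / max 1 (real (card S))"

end

theory Submission imports Defs "HOL-Probability.Probability" begin
lemma bh_seq_Suc: "bh_seq m P (Suc t) = bh_step m P (bh_seq m P t)"
  by (simp add: bh_seq_def)

lemma bh_seq_0: "bh_seq m P 0 = {..<m}"
  by (simp add: bh_seq_def)

lemma bh_seq_sub: "bh_seq m P (Suc t) \<subseteq> bh_seq m P t"
  by (auto simp: bh_seq_Suc bh_step_def)

lemma bh_seq_lt: "bh_seq m P t \<subseteq> {..<m}"
proof (induction t)
  case 0 then show ?case by (simp add: bh_seq_0)
next
  case (Suc t) then show ?case using bh_seq_sub[of m P t] by blast
qed

lemma bh_seq_anti: "s \<le> t \<Longrightarrow> bh_seq m P t \<subseteq> bh_seq m P s"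
proof (induction t)
  case 0 then show ?case by simp
next
  case (Suc t) then show ?case using bh_seq_sub[of m P t] by (cases "s = Suc t") auto
qed

lemma bh_seq_fix: "bh_seq m P (Suc t) = bh_seq m P t \<Longrightarrow> bh_seq m P (t + n) = bh_seq m P t"
proof (induction n)
  case 0 then show ?case by simp
next
  case (Suc n)
  have "bh_seq m P (t + Suc n) = bh_step m P (bh_seq m P (t + n))" by (simp add: bh_seq_Suc)
  also have "\<dots> = bh_step m P (bh_seq m P t)" using Suc by simp
  also have "\<dots> = bh_seq m P t" using Suc.prems by (simp add: bh_seq_Suc)
  finally show ?case .
qed

lemma bh_card_dec: "(\<forall>s<t. bh_seq m P (Suc s) \<noteq> bh_seq m P s) \<Longrightarrow> card (bh_seq m P t) + t \<le> m"
proof (induction t)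
  case 0 then show ?case using card_mono[OF _ bh_seq_lt[of m P 0]] by simp
next
  case (Suc t)
  have fin: "finite (bh_seq m P t)" using bh_seq_lt[of m P t] finite_subset by blast
  have "bh_seq m P (Suc t) \<subset> bh_seq m P t" using bh_seq_sub[of m P t] Suc.prems by auto
  then have "card (bh_seq m P (Suc t)) < card (bh_seq m P t)" using psubset_card_mono fin by blast
  then show ?case using Suc by simp
qed

lemma bh_exists_fix: "\<exists>t\<le>m. bh_seq m P (Suc t) = bh_seq m P t"
proof (rule ccontr)
  assume "\<not> ?thesis"
  then have "\<forall>s<Suc m. bh_seq m P (Suc s) \<noteq> bh_seq m P s" by auto
  from bh_card_dec[OF this] show False by simp
qed

lemma bh_out_eq: "bh_out m P = bh_seq m P m \<and> bh_seq m P (Suc m) = bh_seq m P m"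
proof -
  define t0 where "t0 = (LEAST t. bh_seq m P (Suc t) = bh_seq m P t)"
  obtain t where t: "t \<le> m" "bh_seq m P (Suc t) = bh_seq m P t" using bh_exists_fix by blast
  have t0le: "t0 \<le> m" using Least_le[of "\<lambda>t. bh_seq m P (Suc t) = bh_seq m P t" t] t unfolding t0_def by simp
  have fx: "bh_seq m P (Suc t0) = bh_seq m P t0" unfolding t0_def using t(2) by (rule LeastI)
  have "bh_seq m P (t0 + (m - t0)) = bh_seq m P t0" by (rule bh_seq_fix[OF fx])
  moreover have "bh_seq m P (t0 + (Suc m - t0)) = bh_seq m P t0" by (rule bh_seq_fix[OF fx])
  ultimately show ?thesis using t0le unfolding bh_out_def t0_def[symmetric]
    by (simp add: Suc_diff_le)
qed

lemma bh_out_prop: "i \<in> bh_out m P \<Longrightarrow> P i \<le> ereal (real (card (bh_out m P)) / real m)"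
  using bh_out_eq[of m P] by (auto simp: bh_seq_Suc bh_step_def)

lemma bh_seq_cong: "(\<forall>j<m. P j = P' j) \<Longrightarrow> bh_seq m P t = bh_seq m P' t"
proof (induction t)
  case 0 then show ?case by (simp add: bh_seq_0)
next
  case (Suc t)
  then show ?case using bh_seq_lt[of m P t] by (auto simp: bh_seq_Suc bh_step_def)
qed

lemma bh_loo_seq:
  assumes "i \<in> bh_seq m P m" "t \<le> m"
  shows "bh_seq m P t = bh_seq m (P(i := -\<infinity>)) t"
  using assms(2)
proof (induction t)
  case 0 then show ?case by (simp add: bh_seq_0)
next
  case (Suc t)
  have "i \<in> bh_seq m P (Suc t)" using assms(1) bh_seq_anti[OF Suc.prems] by blast
  then have "i \<in> bh_seq m P t \<and> P i \<le> ereal (real (card (bh_seq m P t)) / real m)"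
    by (auto simp: bh_seq_Suc bh_step_def)
  then show ?case using Suc by (auto simp: bh_seq_Suc bh_step_def)
qed

lemma bh_loo: "i \<in> bh_out m P \<Longrightarrow> bh_out m P = bh_out m (P(i := -\<infinity>))"
  using bh_loo_seq[of i m P m] bh_out_eq[of m P] bh_out_eq[of m "P(i := -\<infinity>)"] by simp

lemma bh_key:
  "(if i \<in> bh_out m P then 1 else 0) / max 1 (real (card (bh_out m P)))
   \<le> (if P i \<le> ereal (real (card (bh_out m (P(i := -\<infinity>)))) / real m) then 1 else 0)
      / max 1 (real (card (bh_out m (P(i := -\<infinity>)))))"
proof (cases "i \<in> bh_out m P")
  case True
  then show ?thesis using bh_loo[OF True] bh_out_prop[OF True] by simp
qed simp
lemma card_sub_sum: "S \<subseteq> {..<(m::nat)} \<Longrightarrow> real (card S) = (\<Sum>l<m. if l \<in> S then 1 else 0)"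
proof -
  assume S: "S \<subseteq> {..<m}"
  have "(\<Sum>l<m. (if l \<in> S then 1 else 0::real)) = (\<Sum>l\<in>{..<m} \<inter> S. 1)"
    by (subst sum.inter_restrict) auto
  also have "{..<m} \<inter> S = S" using S by blast
  finally show ?thesis by simp
qed

lemma bh_seq_pred:
  assumes P: "\<And>j. j < m \<Longrightarrow> (\<lambda>x. P x j) \<in> borel_measurable L"
  shows "\<forall>j. Measurable.pred L (\<lambda>x. j \<in> bh_seq m (P x) t)"
proof (induction t)
  case 0 then show ?case by (simp add: bh_seq_0)
next
  case (Suc t)
  have c: "(\<lambda>x. real (card (bh_seq m (P x) t))) \<in> borel_measurable L"
  proof -
    have "(\<lambda>x. \<Sum>l<m. if l \<in> bh_seq m (P x) t then 1 else 0::real) \<in> borel_measurable L"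
      using Suc by (intro borel_measurable_sum measurable_If) (auto simp: pred_def)
    then show ?thesis using card_sub_sum[OF bh_seq_lt[of m _ t]] by simp
  qed
  show ?case
  proof
    fix j
    show "Measurable.pred L (\<lambda>x. j \<in> bh_seq m (P x) (Suc t))"
    proof (cases "j < m")
      case True
      have "Measurable.pred L (\<lambda>x. j \<in> bh_seq m (P x) t \<and> P x j \<le> ereal (real (card (bh_seq m (P x) t)) / real m))"
        using Suc c P[OF True] unfolding pred_def
        by (intro pred_intros_logic[unfolded pred_def] borel_measurable_le) (auto simp: pred_def)
      then show ?thesis by (simp add: bh_seq_Suc bh_step_def)
    next
      case False
      then have "(\<lambda>x. j \<in> bh_seq m (P x) (Suc t)) = (\<lambda>x. False)" using bh_seq_lt by blast
      then show ?thesis by simp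
    qed
  qed
qed

lemma bh_out_pred:
  assumes P: "\<And>j. j < m \<Longrightarrow> (\<lambda>x. P x j) \<in> borel_measurable L"
  shows "Measurable.pred L (\<lambda>x. j \<in> bh_out m (P x))"
  using bh_seq_pred[OF P, of m] by (simp add: bh_out_eq)

lemma bh_out_card_meas:
  assumes P: "\<And>j. j < m \<Longrightarrow> (\<lambda>x. P x j) \<in> borel_measurable L"
  shows "(\<lambda>x. real (card (bh_out m (P x)))) \<in> borel_measurable L"
proof -
  have "(\<lambda>x. \<Sum>l<m. if l \<in> bh_out m (P x) then 1 else 0::real) \<in> borel_measurable L"
    using bh_out_pred[OF P] by (intro borel_measurable_sum measurable_If) (auto simp: pred_def)
  then show ?thesis using card_sub_sum[OF bh_seq_lt[of m _ m]] by (simp add: bh_out_eq)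
qed

lemma fdp_meas:
  assumes P: "\<And>j. j < m \<Longrightarrow> (\<lambda>x. P x j) \<in> borel_measurable L"
  shows "(\<lambda>x. fdp \<theta> m (bh_out m (P x)) c) \<in> borel_measurable L"
  unfolding fdp_def
  using bh_out_pred[OF P] bh_out_card_meas[OF P]
  by (intro borel_measurable_divide borel_measurable_sum measurable_If borel_measurable_max) (auto simp: pred_def)

lemma per_i:
  fixes M :: "'a measure" and N :: "nat \<Rightarrow> 'b measure" and X :: "nat \<Rightarrow> 'a \<Rightarrow> 'b"
    and p :: "nat \<Rightarrow> 'b \<Rightarrow> real \<Rightarrow> real" and q :: "real \<Rightarrow> real"
    and \<theta> :: "nat \<Rightarrow> real" and I :: "real set" and m :: nat
  assumes M: "prob_space M"
    and q_pos: "\<forall>c\<in>I. q c > 0"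
    and X_meas: "\<forall>i<m. X i \<in> measurable M (N i)"
    and indep: "prob_space.indep_vars M N X {..<m}"
    and p_meas: "\<forall>i<m. \<forall>c\<in>I. (\<lambda>x. p i x c) \<in> borel_measurable (N i)"
    and valid: "\<forall>i<m. \<forall>c\<in>I. c \<le> \<theta> i \<longrightarrow>
                  (\<forall>u\<in>{0..1}. measure M {\<omega>\<in>space M. p i (X i \<omega>) c \<le> u} \<le> u)"
    and Psup_meas: "\<forall>i<m. Psup I q (p i) \<in> borel_measurable (N i)"
    and i: "i < m"
  shows "(\<integral>\<^sup>+\<omega>. ennreal ((if i \<in> bh_out m (\<lambda>j. Psup I q (p j) (X j \<omega>)) then 1 else 0)
             / max 1 (real (card (bh_out m (\<lambda>j. Psup I q (p j) (X j \<omega>)))))) \<partial>M)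
         * (SUP c\<in>{c\<in>I. c \<le> \<theta> i}. ennreal (1 / q c)) \<le> ennreal (1 / real m)"
proof -
  interpret prob_space M by (rule M)
  define P where "P = (\<lambda>\<omega> j. Psup I q (p j) (X j \<omega>))"
  define W where "W = (SUP c\<in>{c\<in>I. c \<le> \<theta> i}. ennreal (1 / q c))"
  have Pm: "\<And>j. j < m \<Longrightarrow> (\<lambda>\<omega>. P \<omega> j) \<in> borel_measurable M"
    unfolding P_def using X_meas Psup_meas by (auto intro: measurable_compose)
  have Qm: "\<And>j. j < m \<Longrightarrow> (\<lambda>\<omega>. ((P \<omega>)(i := -\<infinity>)) j) \<in> borel_measurable M"
    using Pm by (case_tac "j = i") auto
  define T where "T = (\<lambda>\<omega>. real (card (bh_out m ((P \<omega>)(i := -\<infinity>)))))"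
  have Tm: "T \<in> borel_measurable M" unfolding T_def by (rule bh_out_card_meas[OF Qm])
  define A where "A = (\<lambda>k::nat. {\<omega>\<in>space M. P \<omega> i \<le> ereal (real k / real m)})"
  define B where "B = (\<lambda>k::nat. {\<omega>\<in>space M. T \<omega> = real k})"
  have Asets: "A k \<in> sets M" for k unfolding A_def using Pm[OF i] by measurable
  have Bsets: "B k \<in> sets M" for k unfolding B_def using Tm by measurable
  have indepAB: "prob (A k \<inter> B k) = prob (A k) * prob (B k)" for k
  proof -
    have iv: "indep_var (PiM {i} N) (\<lambda>\<omega>. restrict (\<lambda>j. X j \<omega>) {i})
                (PiM ({..<m}-{i}) N) (\<lambda>\<omega>. restrict (\<lambda>j. X j \<omega>) ({..<m}-{i}))"
      by (rule indep_var_restrict[OF indep]) (auto simp: i)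
    define f1 where "f1 = (\<lambda>y. Psup I q (p i) (y i))"
    define f2 where "f2 = (\<lambda>y. ereal (real (card (bh_out m (\<lambda>j. if j = i then -\<infinity> else Psup I q (p j) (y j))))))"
    have f1m: "f1 \<in> borel_measurable (PiM {i} N)" unfolding f1_def using Psup_meas i
      by (intro measurable_compose[OF measurable_component_singleton]) auto
    have f2m: "f2 \<in> borel_measurable (PiM ({..<m}-{i}) N)" unfolding f2_def
    proof (rule borel_measurable_ereal, rule bh_out_card_meas)
      fix j assume j: "j < m"
      show "(\<lambda>y. if j = i then - \<infinity> else Psup I q (p j) (y j)) \<in> borel_measurable (Pi\<^sub>M ({..<m} - {i}) N)"
      proof (cases "j = i")
        case False
        then show ?thesis using Psup_meas j
          by (simp, intro measurable_compose[OF measurable_component_singleton]) auto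
      qed simp
    qed
    note iv2 = indep_var_compose[OF iv f1m f2m]
    have e1: "(f1 \<circ> (\<lambda>\<omega>. restrict (\<lambda>j. X j \<omega>) {i})) \<omega> = P \<omega> i" for \<omega>
      by (simp add: f1_def P_def)
    have e2: "(f2 \<circ> (\<lambda>\<omega>. restrict (\<lambda>j. X j \<omega>) ({..<m}-{i}))) \<omega> = ereal (T \<omega>)" for \<omega>
      unfolding f2_def T_def o_def bh_out_eq[THEN conjunct1]
      by (rule arg_cong[where f="\<lambda>S. ereal (real (card S))"], rule bh_seq_cong) (auto simp: P_def)
    have sA: "{..ereal (real k / real m)} \<in> sets borel" by simp
    have sB: "{ereal (real k)} \<in> sets borel" by simp
    note D = indep_varD[OF iv2 sA sB]
    have "A k \<inter> B k = (\<lambda>x. ((f1 \<circ> (\<lambda>\<omega>. restrict (\<lambda>j. X j \<omega>) {i})) x, (f2 \<circ> (\<lambda>\<omega>. restrict (\<lambda>j. X j \<omega>) ({..<m}-{i}))) x)) -` ({..ereal (real k / real m)} \<times> {ereal (real k)}) \<inter> space M"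
      unfolding A_def B_def using e1 e2 by auto
    moreover have "A k = (f1 \<circ> (\<lambda>\<omega>. restrict (\<lambda>j. X j \<omega>) {i})) -` {..ereal (real k / real m)} \<inter> space M"
      unfolding A_def using e1 by auto
    moreover have "B k = (f2 \<circ> (\<lambda>\<omega>. restrict (\<lambda>j. X j \<omega>) ({..<m}-{i}))) -` {ereal (real k)} \<inter> space M"
      unfolding B_def using e2 by auto
    ultimately show ?thesis using D by simp
  qed
  have Ale: "prob (A k) \<le> q c * (real k / real m)" if c: "c \<in> I" "c \<le> \<theta> i" for c k
  proof -
    define u where "u = q c * (real k / real m)"
    have qc: "q c > 0" using q_pos c by auto
    have u0: "0 \<le> u" unfolding u_def using qc by simp
    define C where "C = {\<omega>\<in>space M. p i (X i \<omega>) c \<le> u}"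
    have pm: "(\<lambda>\<omega>. p i (X i \<omega>) c) \<in> borel_measurable M"
      using X_meas p_meas i c by (auto intro: measurable_compose)
    have Cs: "C \<in> sets M" unfolding C_def using pm by measurable
    have "A k \<subseteq> C"
    proof
      fix \<omega> assume w: "\<omega> \<in> A k"
      have "ereal (p i (X i \<omega>) c / q c) \<le> P \<omega> i"
        unfolding P_def Psup_def using c by (intro SUP_upper) auto
      also have "\<dots> \<le> ereal (real k / real m)" using w unfolding A_def by auto
      finally have "p i (X i \<omega>) c / q c \<le> real k / real m" by simp
      then have "p i (X i \<omega>) c \<le> u" unfolding u_def using qc by (simp add: pos_divide_le_eq mult.commute)
      then show "\<omega> \<in> C" using w unfolding A_def C_def by auto
    qed
    then have "prob (A k) \<le> prob C" using Cs by (rule finite_measure_mono)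
    also have "prob C \<le> u"
    proof (cases "u \<le> 1")
      case True
      then show ?thesis using valid i c u0 unfolding C_def by auto
    next
      case False
      then show ?thesis using prob_le_1[of C] by linarith
    qed
    finally show ?thesis unfolding u_def .
  qed
  have Abound: "W * ennreal (prob (A k)) \<le> ennreal (real k / real m)" for k
    unfolding W_def SUP_mult_right_ennreal
  proof (rule SUP_least)
    fix c assume c: "c \<in> {c \<in> I. c \<le> \<theta> i}"
    have qc: "q c > 0" using q_pos c by auto
    have "ennreal (1 / q c) * ennreal (prob (A k)) = ennreal (prob (A k) / q c)"
      using qc by (simp add: ennreal_mult[symmetric])
    also have "\<dots> \<le> ennreal (real k / real m)"
      using Ale[of c k] c qc by (intro ennreal_leI) (simp add: pos_divide_le_eq mult.commute)
    finally show "ennreal (1 / q c) * ennreal (prob (A k)) \<le> ennreal (real k / real m)" .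
  qed
  have Bsum: "(\<Sum>k\<le>m. prob (B k)) \<le> 1"
  proof -
    have "(\<Sum>k\<le>m. prob (B k)) = prob (\<Union>k\<in>{..m}. B k)"
      using Bsets by (intro finite_measure_finite_Union[symmetric]) (auto simp: disjoint_family_on_def B_def)
    then show ?thesis by simp
  qed
  have step1: "(\<integral>\<^sup>+\<omega>. ennreal ((if i \<in> bh_out m (P \<omega>) then 1 else 0) / max 1 (real (card (bh_out m (P \<omega>))))) \<partial>M)
     \<le> (\<integral>\<^sup>+\<omega>. ennreal ((if P \<omega> i \<le> ereal (T \<omega> / real m) then 1 else 0) / max 1 (T \<omega>)) \<partial>M)"
    unfolding T_def by (intro nn_integral_mono ennreal_leI bh_key)
  have step2: "(\<integral>\<^sup>+\<omega>. ennreal ((if P \<omega> i \<le> ereal (T \<omega> / real m) then 1 else 0) / max 1 (T \<omega>)) \<partial>M)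
     = (\<Sum>k\<le>m. ennreal (1 / max 1 (real k)) * emeasure M (A k \<inter> B k))"
  proof -
    have pw: "ennreal ((if P \<omega> i \<le> ereal (T \<omega> / real m) then 1 else 0) / max 1 (T \<omega>))
        = (\<Sum>k\<le>m. ennreal (1 / max 1 (real k)) * indicator (A k \<inter> B k) \<omega>)" if w: "\<omega> \<in> space M" for \<omega>
    proof -
      define K where "K = card (bh_out m ((P \<omega>)(i := -\<infinity>)))"
      have TK: "T \<omega> = real K" unfolding T_def K_def ..
      have "K \<le> m" unfolding K_def bh_out_eq[THEN conjunct1] using card_mono[OF _ bh_seq_lt] by fastforce
      have "(\<Sum>k\<le>m. ennreal (1 / max 1 (real k)) * indicator (A k \<inter> B k) \<omega>)
          = (\<Sum>k\<le>m. if k = K then ennreal (1 / max 1 (real K)) * (if P \<omega> i \<le> ereal (real K / real m) then 1 else 0) else 0)"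
        by (intro sum.cong) (auto simp: A_def B_def indicator_def TK w)
      also have "\<dots> = ennreal (1 / max 1 (real K)) * (if P \<omega> i \<le> ereal (real K / real m) then 1 else 0)"
        using \<open>K \<le> m\<close> by simp
      also have "\<dots> = ennreal ((if P \<omega> i \<le> ereal (T \<omega> / real m) then 1 else 0) / max 1 (T \<omega>))"
        by (simp add: TK)
      finally show ?thesis by simp
    qed
    have "(\<integral>\<^sup>+\<omega>. ennreal ((if P \<omega> i \<le> ereal (T \<omega> / real m) then 1 else 0) / max 1 (T \<omega>)) \<partial>M)
        = (\<integral>\<^sup>+\<omega>. (\<Sum>k\<le>m. ennreal (1 / max 1 (real k)) * indicator (A k \<inter> B k) \<omega>) \<partial>M)"
      by (intro nn_integral_cong pw)
    also have "\<dots> = (\<Sum>k\<le>m. (\<integral>\<^sup>+\<omega>. ennreal (1 / max 1 (real k)) * indicator (A k \<inter> B k) \<omega> \<partial>M))"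
      using Asets Bsets by (intro nn_integral_sum) auto
    also have "\<dots> = (\<Sum>k\<le>m. ennreal (1 / max 1 (real k)) * emeasure M (A k \<inter> B k))"
      using Asets Bsets by (intro sum.cong refl nn_integral_cmult_indicator) auto
    finally show ?thesis .
  qed
  have "(\<integral>\<^sup>+\<omega>. ennreal ((if i \<in> bh_out m (P \<omega>) then 1 else 0) / max 1 (real (card (bh_out m (P \<omega>))))) \<partial>M) * W
     \<le> (\<Sum>k\<le>m. ennreal (1 / max 1 (real k)) * emeasure M (A k \<inter> B k)) * W"
    using step1 step2 by (auto intro: mult_right_mono)
  also have "\<dots> = (\<Sum>k\<le>m. ennreal (1 / max 1 (real k)) * ennreal (prob (B k)) * (W * ennreal (prob (A k))))"
    by (simp add: sum_distrib_right sum_distrib_left emeasure_eq_measure indepAB ennreal_mult mult_ac)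
  also have "\<dots> \<le> (\<Sum>k\<le>m. ennreal (1 / max 1 (real k)) * ennreal (prob (B k)) * ennreal (real k / real m))"
    by (intro sum_mono mult_left_mono Abound) auto
  also have "\<dots> \<le> (\<Sum>k\<le>m. ennreal (prob (B k) / real m))"
  proof (intro sum_mono)
    fix k assume "k \<in> {..m}"
    have "ennreal (1 / max 1 (real k)) * ennreal (prob (B k)) * ennreal (real k / real m)
        = ennreal (1 / max 1 (real k) * prob (B k) * (real k / real m))"
      by (simp only: ennreal_mult[symmetric] divide_nonneg_nonneg mult_nonneg_nonneg measure_nonneg of_nat_0_le_iff zero_le_one max.coboundedI1)
    also have "\<dots> \<le> ennreal (prob (B k) / real m)"
    proof (intro ennreal_leI)
      have "real k / max 1 (real k) \<le> 1" by simp
      then have "prob (B k) * (real k / max 1 (real k)) \<le> prob (B k)"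
        by (intro mult_left_le) auto
      then have "prob (B k) * (real k / max 1 (real k)) / real m \<le> prob (B k) / real m"
        by (intro divide_right_mono) auto
      then show "1 / max 1 (real k) * prob (B k) * (real k / real m) \<le> prob (B k) / real m"
        by (simp add: field_simps)
    qed
    finally show "ennreal (1 / max 1 (real k)) * ennreal (prob (B k)) * ennreal (real k / real m)
        \<le> ennreal (prob (B k) / real m)" .
  qed
  also have "\<dots> = ennreal ((\<Sum>k\<le>m. prob (B k)) / real m)"
    by (simp add: sum_divide_distrib)
  also have "\<dots> \<le> ennreal (1 / real m)"
    using Bsum by (intro ennreal_leI divide_right_mono) auto
  finally show ?thesis unfolding P_def W_def .
qed

theorem proposition3:
  fixes M :: "'a measure" and N :: "nat \<Rightarrow> 'b measure" and X :: "nat \<Rightarrow> 'a \<Rightarrow> 'b"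
    and p :: "nat \<Rightarrow> 'b \<Rightarrow> real \<Rightarrow> real" and q :: "real \<Rightarrow> real"
    and \<theta> :: "nat \<Rightarrow> real" and I :: "real set" and m :: nat
  assumes M: "prob_space M"
    and q_pos: "\<forall>c\<in>I. q c > 0"
    and X_meas: "\<forall>i<m. X i \<in> measurable M (N i)"
    and indep: "prob_space.indep_vars M N X {..<m}"
    and p_range: "\<forall>i<m. \<forall>x\<in>space (N i). \<forall>c\<in>I. p i x c \<in> {0..1}"
    and p_meas: "\<forall>i<m. \<forall>c\<in>I. (\<lambda>x. p i x c) \<in> borel_measurable (N i)"
    and valid: "\<forall>i<m. \<forall>c\<in>I. c \<le> \<theta> i \<longrightarrow>
                  (\<forall>u\<in>{0..1}. measure M {\<omega>\<in>space M. p i (X i \<omega>) c \<le> u} \<le> u)"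
    and Psup_meas: "\<forall>i<m. Psup I q (p i) \<in> borel_measurable (N i)"
  shows "(SUP c\<in>I. ennreal ((\<integral>\<omega>. fdp \<theta> m (bh_out m (\<lambda>i. Psup I q (p i) (X i \<omega>))) c \<partial>M) / q c))
           \<le> (\<integral>\<^sup>+\<omega>. (SUP c\<in>I. ennreal (fdp \<theta> m (bh_out m (\<lambda>i. Psup I q (p i) (X i \<omega>))) c / q c)) \<partial>M)
       \<and> (\<integral>\<^sup>+\<omega>. (SUP c\<in>I. ennreal (fdp \<theta> m (bh_out m (\<lambda>i. Psup I q (p i) (X i \<omega>))) c / q c)) \<partial>M) \<le> 1"
proof -
  interpret prob_space M by (rule M)
  define P where "P = (\<lambda>\<omega> j. Psup I q (p j) (X j \<omega>))"
  have Pm: "\<And>j. j < m \<Longrightarrow> (\<lambda>\<omega>. P \<omega> j) \<in> borel_measurable M"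
    unfolding P_def using X_meas Psup_meas by (auto intro: measurable_compose)
  define g where "g = (\<lambda>\<omega>. SUP c\<in>I. ennreal (fdp \<theta> m (bh_out m (P \<omega>)) c / q c))"
  have part1: "(SUP c\<in>I. ennreal ((\<integral>\<omega>. fdp \<theta> m (bh_out m (P \<omega>)) c \<partial>M) / q c)) \<le> (\<integral>\<^sup>+\<omega>. g \<omega> \<partial>M)"
  proof (rule SUP_least)
    fix c assume c: "c \<in> I"
    have qc: "q c > 0" using q_pos c by auto
    have fm: "(\<lambda>\<omega>. fdp \<theta> m (bh_out m (P \<omega>)) c) \<in> borel_measurable M" by (rule fdp_meas[OF Pm])
    have f0: "0 \<le> fdp \<theta> m S c" for S unfolding fdp_def by (intro divide_nonneg_pos sum_nonneg) auto
    have f1: "fdp \<theta> m S c \<le> real m" for S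
    proof -
      have "(\<Sum>i<m. (if c \<le> \<theta> i \<and> i \<in> S then 1 else 0::real)) \<le> (\<Sum>i<m. 1)"
        by (intro sum_mono) auto
      then have "(\<Sum>i<m. (if c \<le> \<theta> i \<and> i \<in> S then 1 else 0::real)) \<le> real m" by simp
      moreover have "(\<Sum>i<m. (if c \<le> \<theta> i \<and> i \<in> S then 1 else 0::real)) / max 1 (real (card S))
           \<le> (\<Sum>i<m. (if c \<le> \<theta> i \<and> i \<in> S then 1 else 0::real))"
        by (rule order.trans[OF divide_left_mono[of 1]]) (auto intro: sum_nonneg)
      ultimately show ?thesis unfolding fdp_def by linarith
    qed
    have int: "integrable M (\<lambda>\<omega>. fdp \<theta> m (bh_out m (P \<omega>)) c / q c)"
      using fm f0 f1 by (intro integrable_divide integrable_const_bound[where B="real m"]) auto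
    have "ennreal ((\<integral>\<omega>. fdp \<theta> m (bh_out m (P \<omega>)) c \<partial>M) / q c)
        = ennreal (\<integral>\<omega>. fdp \<theta> m (bh_out m (P \<omega>)) c / q c \<partial>M)" by simp
    also have "\<dots> = (\<integral>\<^sup>+\<omega>. ennreal (fdp \<theta> m (bh_out m (P \<omega>)) c / q c) \<partial>M)"
      using int f0 qc by (intro nn_integral_eq_integral[symmetric]) auto
    also have "\<dots> \<le> (\<integral>\<^sup>+\<omega>. g \<omega> \<partial>M)"
      unfolding g_def using c by (intro nn_integral_mono SUP_upper) auto
    finally show "ennreal ((\<integral>\<omega>. fdp \<theta> m (bh_out m (P \<omega>)) c \<partial>M) / q c) \<le> (\<integral>\<^sup>+\<omega>. g \<omega> \<partial>M)" .
  qed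
  define W where "W = (\<lambda>i. SUP c\<in>{c\<in>I. c \<le> \<theta> i}. ennreal (1 / q c))"
  define ind where "ind = (\<lambda>i \<omega>. (if i \<in> bh_out m (P \<omega>) then 1 else 0) / max 1 (real (card (bh_out m (P \<omega>)))))"
  have indm: "(\<lambda>\<omega>. ennreal (ind i \<omega>)) \<in> borel_measurable M" for i
    unfolding ind_def using bh_out_pred[OF Pm] bh_out_card_meas[OF Pm]
    by (intro measurable_compose[OF _ measurable_ennreal] borel_measurable_divide measurable_If borel_measurable_max)
       (auto simp: pred_def)
  have gle: "g \<omega> \<le> (\<Sum>i<m. ennreal (ind i \<omega>) * W i)" for \<omega>
    unfolding g_def
  proof (rule SUP_least)
    fix c assume c: "c \<in> I"
    have qc: "q c > 0" using q_pos c by auto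
    define S where "S = bh_out m (P \<omega>)"
    have "fdp \<theta> m S c / q c = (\<Sum>i<m. (if c \<le> \<theta> i \<and> i \<in> S then 1 else 0) / max 1 (real (card S)) / q c)"
      unfolding fdp_def by (simp add: sum_divide_distrib)
    then have "ennreal (fdp \<theta> m S c / q c) = (\<Sum>i<m. ennreal ((if c \<le> \<theta> i \<and> i \<in> S then 1 else 0) / max 1 (real (card S)) / q c))"
      using qc by (simp add: sum_ennreal)
    also have "\<dots> \<le> (\<Sum>i<m. ennreal (ind i \<omega>) * W i)"
    proof (intro sum_mono)
      fix i assume "i \<in> {..<m}"
      show "ennreal ((if c \<le> \<theta> i \<and> i \<in> S then 1 else 0) / max 1 (real (card S)) / q c) \<le> ennreal (ind i \<omega>) * W i"
      proof (cases "c \<le> \<theta> i \<and> i \<in> S")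
        case True
        have "ennreal ((if c \<le> \<theta> i \<and> i \<in> S then 1 else 0) / max 1 (real (card S)) / q c)
            = ennreal (ind i \<omega>) * ennreal (1 / q c)"
          using True qc unfolding ind_def S_def by (simp add: ennreal_mult[symmetric])
        also have "\<dots> \<le> ennreal (ind i \<omega>) * W i"
          unfolding W_def using True c by (intro mult_left_mono SUP_upper) auto
        finally show ?thesis .
      qed auto
    qed
    finally show "ennreal (fdp \<theta> m (bh_out m (P \<omega>)) c / q c) \<le> (\<Sum>i<m. ennreal (ind i \<omega>) * W i)"
      unfolding S_def .
  qed
  have part2: "(\<integral>\<^sup>+\<omega>. g \<omega> \<partial>M) \<le> 1"
  proof -
    have "(\<integral>\<^sup>+\<omega>. g \<omega> \<partial>M) \<le> (\<integral>\<^sup>+\<omega>. (\<Sum>i<m. ennreal (ind i \<omega>) * W i) \<partial>M)"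
      by (intro nn_integral_mono gle)
    also have "\<dots> = (\<Sum>i<m. (\<integral>\<^sup>+\<omega>. ennreal (ind i \<omega>) * W i \<partial>M))"
      using indm by (intro nn_integral_sum) auto
    also have "\<dots> = (\<Sum>i<m. (\<integral>\<^sup>+\<omega>. ennreal (ind i \<omega>) \<partial>M) * W i)"
      using indm by (intro sum.cong refl nn_integral_multc) 
    also have "\<dots> \<le> (\<Sum>i<m. ennreal (1 / real m))"
    proof (intro sum_mono)
      fix i assume i: "i \<in> {..<m}"
      show "(\<integral>\<^sup>+\<omega>. ennreal (ind i \<omega>) \<partial>M) * W i \<le> ennreal (1 / real m)"
        using per_i[OF M q_pos X_meas indep p_meas valid Psup_meas, of i] i
        unfolding ind_def W_def P_def by simp
    qed
    also have "\<dots> = ennreal (\<Sum>i<m. 1 / real m)" by (rule sum_ennreal) auto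
    also have "\<dots> \<le> 1" by (cases "m = 0") auto
    finally show ?thesis .
  qed
  show ?thesis using part1 part2 unfolding g_def P_def by simp
qed

end
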